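(* Let $(\xi,Q)$ be an RQSE random overlap structure such that $\overline{S_Q}$ has no limit points from below (for every $q\in\overline{S_Q}$, $\sup\{p\in\overline{S_Q}:p<q\}<q$), and let $\nu$ be a random measure directing $(\xi,Q)$. Then almost surely the support of $\nu$ is countable.
   Context: A random overlap structure (ROSt) is a random pair $(\xi,Q)$ with $\xi=(\xi_1\ge\xi_2\ge\cdots\ge0)$, $\sum\xi_i\le1$, and $Q=(q_{ij})$ a symmetric positive semidefinite $\mathbb{N}\times\mathbb{N}$ matrix with $q_{ii}=1$. $S_Q=\{q_{ij}:i\ne j\}$; $Q^{*r}=(q_{ij}^r)$. For $r\in\mathbb{N}$, $\lambda>0$, the map $\Phi_{r,\lambda}$: conditionally on $(\xi,Q)$ let $(\kappa_i)$ be centered Gaussian with covariance $Q^{*r}$, set $\xi'_i=\xi_ie^{\lambda\kappa_i}/\sum_j\xi_je^{\lambda\kappa_j}$ ($\xi'\equiv0$ if $\xi\equiv0$), let $\pi$ order $\xi'$ non-increasingly (ties by original index), and output $((\xi'_{\pi(i)}),(q_{\pi(i)\pi(j)}))$. The ROSt is RQSE if its law is invariant under all $\Phi_{r,\lambda}$ ($r\in\mathbb{N},\lambda>0$), is ergodic (extremal among laws invariant under these maps), and $S_Q\subseteq(-1,1)$. A random Borel probability measure $\nu$ on a separable Hilbert space $\mathcal{H}$ directs $(\xi,Q)$ if, conditionally on $\nu$, $Q$ has the law of $\big((\phi_i,\phi_j)+\delta_{ij}(1-\|\phi_i\|^2)\big)_{i,j}$ where $(\phi_i)$ is i.i.d.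 with law $\nu$. *)

theory Defs
  imports "HOL-Probability.Probability"
begin

definition xspace :: "(nat \<Rightarrow> real) measure" where
  "xspace = PiM UNIV (\<lambda>_. borel)"

definition qspace :: "(nat \<Rightarrow> nat \<Rightarrow> real) measure" where
  "qspace = PiM UNIV (\<lambda>_. PiM UNIV (\<lambda>_. borel))"

definition rost_space :: "((nat \<Rightarrow> real) \<times> (nat \<Rightarrow> nat \<Rightarrow> real)) measure" where
  "rost_space = xspace \<Otimes>\<^sub>M qspace"

definition psd_mat :: "(nat \<Rightarrow> nat \<Rightarrow> real) \<Rightarrow> bool" where
  "psd_mat A \<longleftrightarrow> (\<forall>n c. 0 \<le> (\<Sum>i<n. \<Sum>j<n. c i * c j * A i j))"

definition rost_point :: "(nat \<Rightarrow> real) \<Rightarrow> (nat \<Rightarrow> nat \<Rightarrow> real) \<Rightarrow> bool" where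
  "rost_point x Q \<longleftrightarrow> (\<forall>i. 0 \<le> x i) \<and> (\<forall>i. x (Suc i) \<le> x i) \<and> summable x \<and> suminf x \<le> 1
     \<and> (\<forall>i j. Q i j = Q j i) \<and> (\<forall>i. Q i i = 1) \<and> psd_mat Q"

definition is_gaussian_cov :: "(nat \<Rightarrow> nat \<Rightarrow> real) \<Rightarrow> (nat \<Rightarrow> real) measure \<Rightarrow> bool" where
  "is_gaussian_cov C G \<longleftrightarrow> prob_space G \<and> sets G = sets xspace \<and>
     (\<forall>n t. char (distr G borel (\<lambda>k. \<Sum>i<n. t i * k i)) =
        (\<lambda>\<theta>. complex_of_real (exp (- (\<theta>\<^sup>2 * (\<Sum>i<n. \<Sum>j<n. t i * t j * C i j)) / 2))))"

definition gaussian :: "(nat \<Rightarrow> nat \<Rightarrow> real) \<Rightarrow> (nat \<Rightarrow> real) measure" where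
  "gaussian C = (if \<exists>G. is_gaussian_cov C G then (THE G. is_gaussian_cov C G)
                 else return xspace (\<lambda>_. 0))"

definition reweight :: "real \<Rightarrow> (nat \<Rightarrow> real) \<Rightarrow> (nat \<Rightarrow> real) \<Rightarrow> nat \<Rightarrow> real" where
  "reweight lam x k = (\<lambda>i. if (\<forall>j. x j = 0) then 0
      else x i * exp (lam * k i) / (\<Sum>j. x j * exp (lam * k j)))"

text \<open>Non-increasing ordering, ties broken by original index: pi n is the index whose
  set of predecessors (strictly larger entries, or equal entries with smaller index)
  is finite of cardinality n.\<close>

definition preds :: "(nat \<Rightarrow> real) \<Rightarrow> nat \<Rightarrow> nat set" where
  "preds y i = {j. y i < y j \<or> (y j = y i \<and> j < i)}"

definition sort_perm :: "(nat \<Rightarrow> real) \<Rightarrow> nat \<Rightarrow> nat" where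
  "sort_perm y n = (THE i. finite (preds y i) \<and> card (preds y i) = n)"

definition Phi_kernel :: "nat \<Rightarrow> real \<Rightarrow> (nat \<Rightarrow> real) \<times> (nat \<Rightarrow> nat \<Rightarrow> real)
     \<Rightarrow> ((nat \<Rightarrow> real) \<times> (nat \<Rightarrow> nat \<Rightarrow> real)) measure" where
  "Phi_kernel r lam s = (case s of (x, Q) \<Rightarrow>
     distr (gaussian (\<lambda>i j. Q i j ^ r)) rost_space
       (\<lambda>k. let y = reweight lam x k; p = sort_perm y
            in (\<lambda>n. y (p n), \<lambda>n m. Q (p n) (p m))))"

definition rqse_invariant :: "((nat \<Rightarrow> real) \<times> (nat \<Rightarrow> nat \<Rightarrow> real)) measure \<Rightarrow> bool" where
  "rqse_invariant P \<longleftrightarrow> prob_space P \<and> sets P = sets rost_space \<and>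
     (\<forall>r::nat. r \<ge> 1 \<longrightarrow> (\<forall>lam::real. lam > 0 \<longrightarrow> bind P (Phi_kernel r lam) = P))"

definition rqse_ergodic :: "((nat \<Rightarrow> real) \<times> (nat \<Rightarrow> nat \<Rightarrow> real)) measure \<Rightarrow> bool" where
  "rqse_ergodic P \<longleftrightarrow> rqse_invariant P \<and>
     (\<forall>P1 P2 (a::real). rqse_invariant P1 \<and> rqse_invariant P2 \<and> 0 < a \<and> a < 1 \<and>
        (\<forall>A\<in>sets rost_space. measure P A = a * measure P1 A + (1 - a) * measure P2 A)
        \<longrightarrow> P1 = P)"

definition overlaps :: "(nat \<Rightarrow> nat \<Rightarrow> real) \<Rightarrow> real set" where
  "overlaps Q = {Q i j | i j. i \<noteq> j}"

text \<open>No limit points from below: sup{p in S : p < q} < q (sup of empty set = -infinity).\<close>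

definition no_limit_from_below :: "real set \<Rightarrow> bool" where
  "no_limit_from_below S \<longleftrightarrow> (\<forall>q\<in>S. \<exists>e>0. \<forall>p\<in>S. p < q \<longrightarrow> p \<le> q - e)"

definition gram :: "(nat \<Rightarrow> 'h::real_inner) \<Rightarrow> nat \<Rightarrow> nat \<Rightarrow> real" where
  "gram phi = (\<lambda>i j. inner (phi i) (phi j) + (if i = j then 1 - (norm (phi i))\<^sup>2 else 0))"

definition directs :: "'w measure \<Rightarrow> ('w \<Rightarrow> 'h::real_inner measure) \<Rightarrow> ('w \<Rightarrow> nat \<Rightarrow> nat \<Rightarrow> real) \<Rightarrow> bool" where
  "directs M nu Q \<longleftrightarrow>
     distr M (prob_algebra borel \<Otimes>\<^sub>M qspace) (\<lambda>w. (nu w, Q w)) =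
     bind (distr M (prob_algebra borel) nu)
       (\<lambda>m. distr (PiM UNIV (\<lambda>_. m)) (prob_algebra borel \<Otimes>\<^sub>M qspace) (\<lambda>phi. (m, gram phi)))"

definition msupport :: "'h::metric_space measure \<Rightarrow> 'h set" where
  "msupport m = {x. \<forall>e>0. emeasure m (ball x e) > 0}"

end

theory Submission
  imports Defs
begin


lemma nlb_countable:
  fixes T :: "real set"
  assumes "no_limit_from_below T"
  shows "countable T"
proof -
  from assms have "\<forall>q\<in>T. \<exists>e>0. \<forall>p\<in>T. p < q \<longrightarrow> p \<le> q - e"
    by (simp add: no_limit_from_below_def)
  then obtain e where e: "\<And>q. q \<in> T \<Longrightarrow> e q > 0 \<and> (\<forall>p\<in>T. p < q \<longrightarrow> p \<le> q - e q)"
    by metis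
  have "\<forall>q\<in>T. \<exists>r\<in>\<rat>. q - e q < r \<and> r < q"
  proof
    fix q assume "q \<in> T"
    then have "q - e q < q" using e by auto
    then show "\<exists>r\<in>\<rat>. q - e q < r \<and> r < q" by (rule Rats_dense_in_real)
  qed
  then obtain f where f: "\<And>q. q \<in> T \<Longrightarrow> f q \<in> \<rat> \<and> q - e q < f q \<and> f q < q"
    by metis
  have inj: "inj_on f T"
  proof (rule inj_onI, rule ccontr)
    fix x y assume xy: "x \<in> T" "y \<in> T" "f x = f y" "x \<noteq> y"
    show False
    proof (cases "x < y")
      case True
      then have "x \<le> y - e y" using e[OF xy(2)] xy(1) by auto
      then show False using f[OF xy(1)] f[OF xy(2)] xy(3) by auto
    next
      case False
      then have "y < x" using xy(4) by auto
      then have "y \<le> x - e x" using e[OF xy(1)] xy(2) by auto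
      then show False using f[OF xy(1)] f[OF xy(2)] xy(3) by auto
    qed
  qed
  have "f ` T \<subseteq> \<rat>" using f by auto
  then have "countable (f ` T)" using countable_rat countable_subset by blast
  then show ?thesis using inj countable_image_inj_on by blast
qed

lemma inner_set_countable:
  fixes K :: "'h::{real_inner, second_countable_topology} set"
  assumes T: "no_limit_from_below T"
    and KT: "\<And>x y. x \<in> K \<Longrightarrow> y \<in> K \<Longrightarrow> inner x y \<in> T"
  shows "countable K"
proof -
  have "(\<lambda>x. inner x x) ` K \<subseteq> T" using KT by auto
  then have cN: "countable ((\<lambda>x. inner x x) ` K)"
    using nlb_countable[OF T] countable_subset by blast
  have cL: "countable {x\<in>K. inner x x = c}" if c: "c \<in> (\<lambda>x. inner x x) ` K" for c
  proof -
    have "c \<in> T" using c KT by auto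
    then obtain e where e: "e > 0" "\<And>p. p \<in> T \<Longrightarrow> p < c \<Longrightarrow> p \<le> c - e"
      using T unfolding no_limit_from_below_def by blast
    define L where "L = {x\<in>K. inner x x = c}"
    define d where "d = sqrt (2*e) / 2"
    have d: "d > 0" using e by (simp add: d_def)
    have sep: "dist x y \<ge> 2*d" if xy: "x \<in> L" "y \<in> L" "x \<noteq> y" for x y
    proof -
      have nx: "norm x ^ 2 = c" "norm y ^ 2 = c" using xy by (auto simp: L_def power2_norm_eq_inner)
      have nxy: "norm x = norm y" using nx power2_eq_iff_nonneg[of "norm x" "norm y"] by simp
      have "inner x y \<le> norm x * norm y" by (rule norm_cauchy_schwarz)
      also have "\<dots> = c" using nx nxy by (simp add: power2_eq_square)
      finally have le: "inner x y \<le> c" .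
      have ne: "inner x y \<noteq> c"
      proof
        assume "inner x y = c"
        then have "inner (x - y) (x - y) = 0" using xy by (simp add: L_def inner_diff inner_commute)
        then show False using xy by simp
      qed
      have ixy: "inner x y \<le> c - e" using e(2)[of "inner x y"] KT xy le ne by (auto simp: L_def)
      have "(dist x y)^2 = inner (x - y) (x - y)" by (simp add: dist_norm power2_norm_eq_inner)
      also have "\<dots> = inner x x + inner y y - 2 * inner x y"
        by (simp add: inner_diff inner_commute)
      also have "\<dots> = 2 * c - 2 * inner x y" using xy by (simp add: L_def)
      finally have "(dist x y)^2 \<ge> 2*e" using ixy by linarith
      then have "sqrt (2*e) \<le> sqrt ((dist x y)^2)" by (rule real_sqrt_le_mono)
      then have "dist x y \<ge> sqrt (2*e)" by simp
      then show ?thesis by (simp add: d_def)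
    qed
    let ?F = "(\<lambda>x. ball x d) ` L"
    have "pairwise disjnt ?F"
    proof (rule pairwiseI)
      fix A B assume AB: "A \<in> ?F" "B \<in> ?F" "A \<noteq> B"
      then obtain x y where xy: "x \<in> L" "y \<in> L" "A = ball x d" "B = ball y d" by auto
      then have "x \<noteq> y" using AB by auto
      show "disjnt A B" unfolding disjnt_def
      proof (rule equals0I)
        fix z assume "z \<in> A \<inter> B"
        then have z: "z \<in> ball x d" "z \<in> ball y d" using xy by auto
        have "dist x y \<le> dist x z + dist y z" by (rule dist_triangle2)
        also have "\<dots> < 2*d" using z by simp
        finally have "dist x y < 2*d" .
        with sep[OF xy(1,2) \<open>x \<noteq> y\<close>] show False by simp
      qed
    qed
    then have "countable ?F" by (intro countable_disjoint_open_subsets) auto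
    moreover have "inj_on (\<lambda>x. ball x d) L"
    proof (rule inj_onI)
      fix x y assume "x \<in> L" "y \<in> L" "ball x d = ball y d"
      then have "x \<in> ball y d" using d by (metis centre_in_ball)
      then show "x = y" using sep[OF \<open>x \<in> L\<close> \<open>y \<in> L\<close>] d by (cases "x = y") (auto simp: dist_commute)
    qed
    ultimately show ?thesis using countable_image_inj_on unfolding L_def by blast
  qed
  have "K = (\<Union>c\<in>(\<lambda>x. inner x x) ` K. {x\<in>K. inner x x = c})" by auto
  also have "countable \<dots>" using cN cL by (intro countable_UN) auto
  finally show ?thesis .
qed



lemma inner_approx:
  fixes a b c d :: "'h::real_inner"
  assumes "dist a b \<le> s" "dist c d \<le> s"
  shows "\<bar>inner a c - inner b d\<bar> \<le> s * (norm b + norm d + s)"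
proof -
  have eq: "inner a c - inner b d = inner (a - b) c + inner b (c - d)"
    by (simp add: inner_diff_left inner_diff_right)
  have n1: "norm (a - b) \<le> s" "norm (c - d) \<le> s" using assms by (auto simp: dist_norm)
  have s0: "s \<ge> 0" using assms(1) zero_le_dist order_trans by blast
  have nc: "norm c \<le> norm d + s" using n1(2) norm_triangle_sub[of c d] by linarith
  have t1: "\<bar>inner (a - b) c\<bar> \<le> s * (norm d + s)"
  proof -
    have "\<bar>inner (a - b) c\<bar> \<le> norm (a - b) * norm c" by (rule Cauchy_Schwarz_ineq2)
    also have "\<dots> \<le> s * (norm d + s)" using n1(1) nc s0 by (intro mult_mono) auto
    finally show ?thesis .
  qed
  have t2: "\<bar>inner b (c - d)\<bar> \<le> norm b * s"
  proof -
    have "\<bar>inner b (c - d)\<bar> \<le> norm b * norm (c - d)" by (rule Cauchy_Schwarz_ineq2)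
    also have "\<dots> \<le> norm b * s" using n1(2) by (intro mult_left_mono) auto
    finally show ?thesis .
  qed
  have "\<bar>inner a c - inner b d\<bar> \<le> \<bar>inner (a - b) c\<bar> + \<bar>inner b (c - d)\<bar>"
    unfolding eq by (rule abs_triangle_ineq)
  also have "\<dots> \<le> s * (norm b + norm d + s)" using t1 t2 by (simp add: algebra_simps)
  finally show ?thesis .
qed


definition Gp :: "(nat \<Rightarrow> 'h::real_inner) \<Rightarrow> 'h measure \<Rightarrow> (nat \<Rightarrow> nat \<Rightarrow> real) \<Rightarrow> bool" where
  "Gp dd m A \<longleftrightarrow> (\<forall>k1 k2 n::nat.
     (0 < emeasure m (ball (dd k1) (1 / real (Suc n))) \<and> 0 < emeasure m (ball (dd k2) (1 / real (Suc n))))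
     \<longrightarrow> (\<exists>i j. i \<noteq> j \<and> \<bar>A i j - inner (dd k1) (dd k2)\<bar>
            \<le> (1 / real (Suc n)) * (norm (dd k1) + norm (dd k2) + 1 / real (Suc n))))"

lemma G_support:
  fixes dd :: "nat \<Rightarrow> 'h::real_inner"
  assumes dense: "\<And>x e. e > 0 \<Longrightarrow> \<exists>k. dist (dd k) x < e"
    and G: "Gp dd m A" and sm: "sets m = sets borel"
    and x: "x \<in> msupport m" and y: "y \<in> msupport m"
  shows "inner x y \<in> closure (overlaps A)"
  unfolding closure_approachable
proof (intro allI impI)
  fix \<epsilon> :: real assume ep: "\<epsilon> > 0"
  define C where "C = 2 * (norm x + norm y + 2)"
  have C: "C > 0" unfolding C_def by (simp add: add_nonneg_pos)
  obtain n where n: "inverse (real (Suc n)) < \<epsilon> / C" using reals_Archimedean[of "\<epsilon> / C"] ep C by auto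
  define r where "r = 1 / real (Suc n)"
  have r: "r > 0" "r \<le> 1" "r < \<epsilon> / C" using n by (auto simp: r_def inverse_eq_divide)
  obtain k1 where k1: "dist (dd k1) x < r/2" using dense[of "r/2"] r by auto
  obtain k2 where k2: "dist (dd k2) y < r/2" using dense[of "r/2"] r by auto
  have pos: "0 < emeasure m (ball (dd k) r)" if k: "dist (dd k) z < r/2" and z: "z \<in> msupport m" for k z
  proof -
    have "0 < emeasure m (ball z (r/2))" using z r unfolding msupport_def by auto
    also have "\<dots> \<le> emeasure m (ball (dd k) r)"
    proof (rule emeasure_mono)
      show "ball z (r/2) \<subseteq> ball (dd k) r"
      proof
        fix u assume "u \<in> ball z (r/2)"
        then have "dist z u < r/2" by simp
        then show "u \<in> ball (dd k) r" using k dist_triangle[of "dd k" u z] by simp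
      qed
      show "ball (dd k) r \<in> sets m" using sm by simp
    qed
    finally show ?thesis .
  qed
  have Gi: "\<exists>i j. i \<noteq> j \<and> \<bar>A i j - inner (dd k1) (dd k2)\<bar> \<le> r * (norm (dd k1) + norm (dd k2) + r)"
    by (rule G[unfolded Gp_def, THEN spec[of _ k1], THEN spec[of _ k2], THEN spec[of _ n], folded r_def, THEN mp],
        rule conjI, rule pos[OF k1 x], rule pos[OF k2 y])
  then obtain i j where ij: "i \<noteq> j"
    "\<bar>A i j - inner (dd k1) (dd k2)\<bar> \<le> r * (norm (dd k1) + norm (dd k2) + r)"
    by blast
  have in_ov: "A i j \<in> overlaps A" using ij(1) unfolding overlaps_def by blast
  have a2: "\<bar>inner (dd k1) (dd k2) - inner x y\<bar> \<le> (r/2) * (norm x + norm y + r/2)"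
    using k1 k2 by (intro inner_approx) auto
  have nd1: "norm (dd k1) \<le> norm x + r/2"
    using k1 norm_triangle_sub[of "dd k1" x] by (simp add: dist_norm)
  have nd2: "norm (dd k2) \<le> norm y + r/2"
    using k2 norm_triangle_sub[of "dd k2" y] by (simp add: dist_norm)
  have e1: "r * (norm (dd k1) + norm (dd k2) + r) \<le> r * (norm x + norm y + 2)"
    using nd1 nd2 r by (intro mult_left_mono) auto
  have e2: "(r/2) * (norm x + norm y + r/2) \<le> r * (norm x + norm y + 2)"
  proof -
    have "(r/2) * (norm x + norm y + r/2) \<le> r * (norm x + norm y + r/2)"
      using r by (intro mult_right_mono) auto
    also have "\<dots> \<le> r * (norm x + norm y + 2)" using r by (intro mult_left_mono) auto
    finally show ?thesis .
  qed
  have "dist (A i j) (inner x y) \<le> r * C"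
  proof -
    have "dist (A i j) (inner x y) \<le> \<bar>A i j - inner (dd k1) (dd k2)\<bar> + \<bar>inner (dd k1) (dd k2) - inner x y\<bar>"
      unfolding dist_real_def by linarith
    also have "\<dots> \<le> r * (norm x + norm y + 2) + r * (norm x + norm y + 2)"
      using ij(2) a2 e1 e2 by linarith
    also have "\<dots> = r * C" by (simp add: C_def algebra_simps)
    finally show ?thesis .
  qed
  also have "\<dots> < \<epsilon>" using r C by (simp add: pos_less_divide_eq)
  finally show "\<exists>z\<in>overlaps A. dist z (inner x y) < \<epsilon>" using in_ov by blast
qed



lemma AE_two:
  assumes m: "prob_space m" and B: "B1 \<in> sets m" "B2 \<in> sets m"
    and p: "0 < emeasure m B1" "0 < emeasure m B2"
  shows "AE phi in PiM UNIV (\<lambda>_::nat. m). \<exists>i j. i \<noteq> j \<and> phi i \<in> B1 \<and> phi j \<in> B2"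
proof -
  interpret m: prob_space m by fact
  let ?P = "PiM UNIV (\<lambda>_::nat. m)"
  interpret P: prob_space ?P by (rule prob_space_PiM) (rule m)
  define E where "E J B = prod_emb UNIV (\<lambda>_. m) J (PiE J (\<lambda>_. space m - B))" for J :: "nat set" and B
  define N where "N = (\<Inter>n. E {..<n} B1 \<union> E {n..<2*n} B2)"
  have Es: "E J B \<in> sets ?P" if "finite J" "B \<in> sets m" for J B
    unfolding E_def using that by (intro sets_PiM_I) auto
  have mE: "measure ?P (E J B) = (1 - measure m B) ^ card J" if "finite J" "B \<in> sets m" for J B
  proof -
    have "emeasure ?P (E J B) = (\<Prod>i\<in>J. emeasure m (space m - B))"
      unfolding E_def using that m by (intro emeasure_PiM_emb) auto
    also have "\<dots> = ennreal ((1 - measure m B) ^ card J)"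
      using that m.prob_le_1[of B] by (simp add: m.emeasure_eq_measure m.prob_compl ennreal_power)
    finally show ?thesis using m.prob_le_1[of B] by (simp add: measure_def)
  qed
  have Ns: "N \<in> sets ?P" unfolding N_def using Es B by (intro sets.countable_INT' sets.Un) auto
  have sub: "{phi \<in> space ?P. \<not> (\<exists>i j. i \<noteq> j \<and> phi i \<in> B1 \<and> phi j \<in> B2)} \<subseteq> N"
  proof (clarify)
    fix phi assume sp: "phi \<in> space ?P" and nex: "\<not> (\<exists>i j. i \<noteq> j \<and> phi i \<in> B1 \<and> phi j \<in> B2)"
    have sp': "\<And>k. phi k \<in> space m" using sp by (auto simp: space_PiM)
    show "phi \<in> N" unfolding N_def
    proof (clarify)
      fix n assume no2: "phi \<notin> E {n..<2*n} B2"
      show "phi \<in> E {..<n} B1"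
      proof (rule ccontr)
        assume no1: "phi \<notin> E {..<n} B1"
        from no1 sp' obtain k where k: "k < n" "phi k \<in> B1"
          unfolding E_def prod_emb_iff restrict_PiE_iff by auto
        from no2 sp' obtain j where j: "n \<le> j" "j < 2*n" "phi j \<in> B2"
          unfolding E_def prod_emb_iff restrict_PiE_iff by auto
        have "k \<noteq> j" using k j by auto
        then show False using nex k j by blast
      qed
    qed
  qed
  define p1 where "p1 = measure m B1"
  define p2 where "p2 = measure m B2"
  have p1: "0 < p1" "p1 \<le> 1" using p(1) m.prob_le_1 by (auto simp: p1_def m.emeasure_eq_measure)
  have p2: "0 < p2" "p2 \<le> 1" using p(2) m.prob_le_1 by (auto simp: p2_def m.emeasure_eq_measure)
  have bound: "measure ?P N \<le> (1 - p1) ^ n + (1 - p2) ^ n" for n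
  proof -
    have "measure ?P N \<le> measure ?P (E {..<n} B1 \<union> E {n..<2*n} B2)"
      using Es B by (intro P.finite_measure_mono) (auto simp: N_def)
    also have "\<dots> \<le> measure ?P (E {..<n} B1) + measure ?P (E {n..<2*n} B2)"
      using Es B by (intro measure_Un_le) auto
    also have "\<dots> = (1 - p1) ^ n + (1 - p2) ^ n"
      using B by (simp add: mE p1_def p2_def)
    finally show ?thesis .
  qed
  have lim: "(\<lambda>n. (1 - p1) ^ n + (1 - p2) ^ n) \<longlonglongrightarrow> 0"
    using p1 p2 by (intro tendsto_add_zero LIMSEQ_realpow_zero) auto
  have "measure ?P N \<le> 0" using bound by (intro LIMSEQ_le_const[OF lim]) auto
  then have "emeasure ?P N = 0" by (simp add: P.emeasure_eq_measure measure_nonneg antisym)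
  then show ?thesis using sub Ns by (intro AE_I[OF sub]) auto
qed

lemma AE_G:
  fixes dd :: "nat \<Rightarrow> 'h::{real_inner, second_countable_topology}"
  assumes m: "m \<in> space (prob_algebra borel)"
  shows "AE phi in PiM UNIV (\<lambda>_::nat. m). Gp dd m (gram phi)"
proof -
  from m have pm: "prob_space m" and sm: "sets m = sets borel" by (auto simp: space_prob_algebra)
  show ?thesis
    unfolding Gp_def AE_all_countable
  proof (intro allI)
    fix k1 k2 n :: nat
    define r where "r = 1 / real (Suc n)"
    show "AE phi in PiM (UNIV::nat set) (\<lambda>_. m).
       (0 < emeasure m (ball (dd k1) (1 / real (Suc n))) \<and> 0 < emeasure m (ball (dd k2) (1 / real (Suc n))))
     \<longrightarrow> (\<exists>i j. i \<noteq> j \<and> \<bar>gram (phi::nat \<Rightarrow> 'h) i j - inner (dd k1) (dd k2)\<bar>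
            \<le> (1 / real (Suc n)) * (norm (dd k1) + norm (dd k2) + 1 / real (Suc n)))"
    proof (cases "0 < emeasure m (ball (dd k1) r) \<and> 0 < emeasure m (ball (dd k2) r)")
      case True
      have AEf: "AE phi in PiM UNIV (\<lambda>_::nat. m). \<exists>i j. i \<noteq> j \<and> phi i \<in> ball (dd k1) r \<and> phi j \<in> ball (dd k2) r"
        using True sm by (intro AE_two pm) auto
      have key: "\<exists>i j. i \<noteq> j \<and> \<bar>gram phi i j - inner (dd k1) (dd k2)\<bar> \<le> r * (norm (dd k1) + norm (dd k2) + r)"
        if "\<exists>i j. i \<noteq> j \<and> phi i \<in> ball (dd k1) r \<and> phi j \<in> ball (dd k2) r" for phi :: "nat \<Rightarrow> 'h"
      proof -
        from that obtain i j where ij: "i \<noteq> j" "phi i \<in> ball (dd k1) r" "phi j \<in> ball (dd k2) r" by blast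
        have "\<bar>inner (phi i) (phi j) - inner (dd k1) (dd k2)\<bar> \<le> r * (norm (dd k1) + norm (dd k2) + r)"
          using ij by (intro inner_approx) (auto simp: dist_commute)
        then show ?thesis using ij(1) by (auto simp: gram_def)
      qed
      show ?thesis unfolding r_def[symmetric] by (rule eventually_mono[OF AEf]) (use key in blast)
    next
      case False
      then show ?thesis by (intro AE_I2) (auto simp: r_def)
    qed
  qed
qed


lemma measurable_emeasure_prob_algebra'[measurable]:
  "a \<in> sets A \<Longrightarrow> (\<lambda>M. emeasure M a) \<in> borel_measurable (prob_algebra A)"
  unfolding prob_algebra_def by (intro measurable_restrict_space1 measurable_emeasure_subprob_algebra)

lemma ball_borel'[measurable]: "ball (x::'a::metric_space) r \<in> sets borel"
  by simp

lemma measurable_PiM_kernel: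
  "(\<lambda>m. PiM (UNIV::nat set) (\<lambda>_. m)) \<in> prob_algebra (borel::'h::topological_space measure)
      \<rightarrow>\<^sub>M prob_algebra (PiM UNIV (\<lambda>_. borel))"
proof (rule measurable_prob_algebra_generated[OF sets_PiM Int_stable_prod_algebra prod_algebra_sets_into_space])
  fix a :: "'h measure" assume "a \<in> space (prob_algebra borel)"
  then have a: "prob_space a" "sets a = sets borel" by (auto simp: space_prob_algebra)
  show "prob_space (PiM UNIV (\<lambda>_::nat. a))" using a by (intro prob_space_PiM) auto
  show "sets (PiM UNIV (\<lambda>_::nat. a)) = sets (PiM UNIV (\<lambda>_. borel))" using a by (intro sets_PiM_cong) auto
next
  fix A assume "A \<in> prod_algebra UNIV (\<lambda>_::nat. borel::'h measure)"
  then obtain J E where A: "A = prod_emb UNIV (\<lambda>_. borel) J (PiE J E)" "finite J"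
      "\<And>i. i \<in> J \<Longrightarrow> E i \<in> sets borel"
    by (auto elim!: prod_algebraE)
  have pm: "(\<lambda>a. \<Prod>i\<in>J. emeasure a (E i)) \<in> borel_measurable (prob_algebra (borel::'h measure))"
    using A(3) by (intro borel_measurable_prod_ennreal measurable_emeasure_prob_algebra') auto
  have eq: "emeasure (PiM UNIV (\<lambda>_. a)) A = (\<Prod>i\<in>J. emeasure a (E i))"
    if "a \<in> space (prob_algebra borel)" for a :: "'h measure"
  proof -
    from that have a: "prob_space a" "sets a = sets borel" by (auto simp: space_prob_algebra)
    have sp: "space a = UNIV" using sets_eq_imp_space_eq[OF a(2)] by simp
    have "A = prod_emb UNIV (\<lambda>_. a) J (PiE J E)" using A sp by (simp add: prod_emb_def)
    then show ?thesis using A a by (simp add: emeasure_PiM_emb)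
  qed
  show "(\<lambda>a. emeasure (PiM UNIV (\<lambda>_. a)) A) \<in> borel_measurable (prob_algebra borel)"
    using measurable_cong[of "prob_algebra borel" "\<lambda>a. emeasure (PiM UNIV (\<lambda>_::nat. a)) A"
        "\<lambda>a. \<Prod>i\<in>J. emeasure a (E i)" borel] eq pm by blast
qed

lemma measurable_gram[measurable]:
  "gram \<in> PiM UNIV (\<lambda>_::nat. borel::'h::{real_inner,second_countable_topology} measure) \<rightarrow>\<^sub>M qspace"
  unfolding qspace_def
proof (rule measurable_PiM_single')
  fix i :: nat
  show "(\<lambda>phi. gram phi i) \<in> PiM UNIV (\<lambda>_::nat. borel::'h measure) \<rightarrow>\<^sub>M PiM UNIV (\<lambda>_. borel)"
  proof (rule measurable_PiM_single')
    fix j :: nat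
    show "(\<lambda>phi. gram phi i j) \<in> borel_measurable (PiM UNIV (\<lambda>_::nat. borel::'h measure))"
      unfolding gram_def by measurable
  qed (auto simp: space_PiM)
qed (auto simp: space_PiM)

definition Kn :: "'h::{real_inner,second_countable_topology} measure \<Rightarrow> ('h measure \<times> (nat \<Rightarrow> nat \<Rightarrow> real)) measure" where
  "Kn m = distr (PiM UNIV (\<lambda>_::nat. m)) (prob_algebra borel \<Otimes>\<^sub>M qspace) (\<lambda>phi. (m, gram phi))"

lemma Kn_meas:
  "Kn \<in> prob_algebra (borel::'h::{real_inner,second_countable_topology} measure)
     \<rightarrow>\<^sub>M prob_algebra (prob_algebra borel \<Otimes>\<^sub>M qspace)"
  unfolding Kn_def[abs_def]
  by (rule measurable_distr_prob_space2[OF measurable_PiM_kernel]) measurable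

lemma pred_Gp:
  "Measurable.pred (prob_algebra (borel::'h::{real_inner,second_countable_topology} measure) \<Otimes>\<^sub>M qspace)
     (\<lambda>x. Gp dd (fst x) (snd x))"
proof -
  let ?O = "prob_algebra (borel::'h measure) \<Otimes>\<^sub>M qspace"
  have em: "(\<lambda>x. emeasure (fst x) B) \<in> borel_measurable ?O" if "B \<in> sets borel" for B :: "'h set"
    by (rule measurable_compose[OF measurable_fst measurable_emeasure_prob_algebra'[OF that]])
  have pos: "Measurable.pred ?O (\<lambda>x. 0 < emeasure (fst x) B)" if "B \<in> sets borel" for B :: "'h set"
    unfolding pred_def using borel_measurable_less[OF borel_measurable_const em[OF that]] .
  have comp[measurable]: "(\<lambda>x. snd x i j) \<in> borel_measurable ?O" for i j :: nat
  proof -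
    have a: "(\<lambda>A::nat\<Rightarrow>nat\<Rightarrow>real. A i) \<in> qspace \<rightarrow>\<^sub>M PiM UNIV (\<lambda>_. borel)"
      unfolding qspace_def by (rule measurable_component_singleton) simp
    have b: "(\<lambda>f::nat\<Rightarrow>real. f j) \<in> PiM UNIV (\<lambda>_. borel) \<rightarrow>\<^sub>M borel"
      by (rule measurable_component_singleton) simp
    have "(\<lambda>A::nat\<Rightarrow>nat\<Rightarrow>real. A i j) \<in> qspace \<rightarrow>\<^sub>M borel"
      using measurable_compose[OF a b] by simp
    then show ?thesis using measurable_compose[OF measurable_snd] by blast
  qed
  have le: "Measurable.pred ?O (\<lambda>x. \<bar>snd x i j - c\<bar> \<le> t)" for i j :: nat and c t :: real
    by measurable
  show ?thesis
    unfolding Gp_def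
    apply (rule pred_intros_countable(1))+
    apply (rule pred_intros_logic(4))
     apply (rule pred_intros_logic(3))
      apply (rule pos, simp)
     apply (rule pos, simp)
    apply (rule pred_intros_countable(2))+
    apply (rule pred_intros_conj1')
    apply (rule le)
    done
qed


theorem lemma4p2:
  fixes M :: "'w measure"
    and xi :: "'w \<Rightarrow> nat \<Rightarrow> real"
    and Q :: "'w \<Rightarrow> nat \<Rightarrow> nat \<Rightarrow> real"
    and nu :: "'w \<Rightarrow> 'h::{real_inner, complete_space, second_countable_topology} measure"
  assumes "prob_space M"
    and "xi \<in> M \<rightarrow>\<^sub>M xspace"
    and "Q \<in> M \<rightarrow>\<^sub>M qspace"
    and "AE w in M. rost_point (xi w) (Q w)"
    and "rqse_ergodic (distr M rost_space (\<lambda>w. (xi w, Q w)))"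
    and "AE w in M. overlaps (Q w) \<subseteq> {-1<..<1}"
    and "AE w in M. no_limit_from_below (closure (overlaps (Q w)))"
    and "nu \<in> M \<rightarrow>\<^sub>M prob_algebra borel"
    and "directs M nu Q"
  shows "AE w in M. countable (msupport (nu w))"
proof -
  obtain D :: "'h set" where D: "countable D" "\<And>X. open X \<Longrightarrow> X \<noteq> {} \<Longrightarrow> \<exists>d\<in>D. d \<in> X"
    using countable_dense_setE by blast
  define dd where "dd = from_nat_into D"
  have dense: "\<exists>k. dist (dd k) x < e" if epos: "e > 0" for x :: 'h and e :: real
  proof -
    obtain d where d: "d \<in> D" "d \<in> ball x e" using D(2)[of "ball x e"] epos by auto
    then obtain k where "dd k = d" using from_nat_into_surj[OF D(1)] dd_def by metis
    then show ?thesis using d by (auto simp: dist_commute)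
  qed
  let ?OUT = "prob_algebra (borel::'h measure) \<Otimes>\<^sub>M qspace"
  let ?L = "distr M (prob_algebra (borel::'h measure)) nu"
  have Kn_meas': "Kn \<in> ?L \<rightarrow>\<^sub>M subprob_algebra ?OUT"
    using measurable_prob_algebraD[OF Kn_meas] by (simp cong: measurable_cong_sets)
  have AEb: "AE x in ?L \<bind> Kn. Gp dd (fst x) (snd x)"
    unfolding AE_bind[OF Kn_meas' pred_Gp]
  proof (rule AE_I2)
    fix m assume "m \<in> space ?L"
    then have m: "m \<in> space (prob_algebra borel)" by simp
    then have sm: "sets m = sets borel" by (auto simp: space_prob_algebra)
    have fm: "(\<lambda>phi. (m, gram phi)) \<in> PiM UNIV (\<lambda>_::nat. m) \<rightarrow>\<^sub>M ?OUT"
    proof -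
      have "(\<lambda>phi. (m, gram phi)) \<in> PiM UNIV (\<lambda>_::nat. borel::'h measure) \<rightarrow>\<^sub>M ?OUT"
        using m by measurable
      moreover have "sets (PiM UNIV (\<lambda>_::nat. m)) = sets (PiM UNIV (\<lambda>_::nat. borel::'h measure))"
        using sm by (intro sets_PiM_cong) auto
      ultimately show ?thesis by (simp cong: measurable_cong_sets)
    qed
    have ps: "{x \<in> space ?OUT. Gp dd (fst x) (snd x)} \<in> sets ?OUT"
      using pred_Gp[of dd] by (simp add: pred_def)
    show "AE y in Kn m. Gp dd (fst y) (snd y)"
      unfolding Kn_def AE_distr_iff[OF fm ps] using AE_G[OF m, of dd] by simp
  qed
  have eqK: "(\<lambda>m. distr (PiM UNIV (\<lambda>_::nat. m)) ?OUT (\<lambda>phi. (m, gram phi))) = Kn"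
    by (rule ext) (simp add: Kn_def)
  have eqd: "distr M ?OUT (\<lambda>w. (nu w, Q w)) = ?L \<bind> Kn"
    using assms(9) unfolding directs_def eqK .
  have "AE x in distr M ?OUT (\<lambda>w. (nu w, Q w)). Gp dd (fst x) (snd x)" unfolding eqd by (rule AEb)
  moreover have "(\<lambda>w. (nu w, Q w)) \<in> M \<rightarrow>\<^sub>M ?OUT" using assms(8,3) by (rule measurable_Pair)
  ultimately have "AE w in M. (\<lambda>x. Gp dd (fst x) (snd x)) (nu w, Q w)"
    using AE_distrD[of "\<lambda>w. (nu w, Q w)" M ?OUT "\<lambda>x. Gp dd (fst x) (snd x)"] by blast
  then have AEG: "AE w in M. Gp dd (nu w) (Q w)" by simp
  have AEsp: "AE w in M. nu w \<in> space (prob_algebra borel)"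
    using measurable_space[OF assms(8)] by (intro AE_I2) auto
  show ?thesis
    using AEG AEsp assms(7)
  proof (eventually_elim)
    case (elim w)
    then have sm: "sets (nu w) = sets borel" by (auto simp: space_prob_algebra)
    show ?case
      by (rule inner_set_countable[OF elim(3)]) (rule G_support[OF dense elim(1) sm]; simp)
  qed
qed


end
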